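(* Let $(p_n)$ be a sequence in $(0,1)$ such that $\alpha=\lim_{n\to\infty}p_n\log n$ exists with $0<\alpha<\infty$, and let $\gamma>0$. For the torn-paper channel with block length $n$ and tearing probability $p_n$, let $\mathcal Y_\gamma$ be the collection of output fragments $\vec Y_i$ whose underlying length satisfies $N_{\pi_i}\ge\gamma\log n$, and $|\mathcal Y_\gamma|$ their number. Then for any $\epsilon>0$, $$\lim_{n\to\infty}\Pr\left(\big||\mathcal Y_\gamma| - e^{-\alpha\gamma} n p_n\big|>\epsilon n p_n\right)=0.$$
   Context: Logarithms are base 2. The torn-paper channel with block length $n$ and tearing probability $p_n$: the input $X^n\in\{0,1\}^n$ is cut into consecutive fragments $\vec X_1,\dots,\vec X_K$, where $N_1,N_2,\dots$ are i.i.d. $\mathrm{Geometric}(p_n)$ (support $\{1,2,\dots\}$, mean $1/p_n$), $K$ is the smallest index with $\sum_{i=1}^K N_i\ge n$, $\vec X_i$ consists of positions $1+\sum_{j<i}N_j$ through $\sum_{j\le i}N_j$ for $i<K$, and $\vec X_K$ of positions $1+\sum_{j<K}N_j$ through $n$. Given $K$, $\pi$ is a uniformly random permutation of $\{1,\dots,K\}$ and the output is the unordered collection $\{\vec Y_1,\dots,\vec Y_K\}$ with $\vec Y_i=\vec X_{\pi_i}$. Thus $|\mathcal Y_\gamma|=\sum_{i=1}^K \mathbf 1\{N_i\ge\gamma\log n\}$. *)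

theory Defs
  imports "HOL-Probability.Probability"
begin

definition geom1_pmf :: "real \<Rightarrow> nat pmf" where
  "geom1_pmf p = map_pmf Suc (geometric_pmf p)"

definition num_fragments :: "nat \<Rightarrow> (nat \<Rightarrow> nat) \<Rightarrow> nat" where
  "num_fragments n N = (LEAST k. real n \<le> (\<Sum>i=1..k. real (N i)))"

definition num_long_fragments :: "real \<Rightarrow> nat \<Rightarrow> (nat \<Rightarrow> nat) \<Rightarrow> nat" where
  "num_long_fragments \<gamma> n N =
     card {i \<in> {1..num_fragments n N}. real (N i) \<ge> \<gamma> * log 2 (real n)}"

end

theory Submission
  imports Defs "HOL-Real_Asymp.Real_Asymp"
begin


lemma (in prob_space) cheb_indep_sum:
  fixes X :: "nat \<Rightarrow> 'a \<Rightarrow> real" and I :: "nat set"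
  assumes fin: "finite I" and ind: "indep_vars (\<lambda>_. borel) X I"
   and sq: "\<And>i. i\<in>I \<Longrightarrow> integrable M (\<lambda>x. (X i x)^2)"
   and mu: "\<And>i. i \<in> I \<Longrightarrow> expectation (X i) = \<mu>"
   and var: "\<And>i. i\<in>I \<Longrightarrow> expectation (\<lambda>x. (X i x - \<mu>)^2) \<le> v"
   and e: "e > 0"
  shows "prob {x\<in>space M. e \<le> \<bar>(\<Sum>i\<in>I. X i x) - real (card I) * \<mu>\<bar>} \<le> real (card I) * v / e^2"
proof -
  have rv[measurable]: "X i \<in> borel_measurable M" if "i \<in> I" for i
    using ind that unfolding indep_vars_def by blast
  have intX: "integrable M (X i)" if "i \<in> I" for i
    using square_integrable_imp_integrable[OF rv[OF that] sq[OF that]] .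
  define Y where "Y i x = X i x - \<mu>" for i x
  have rvY[measurable]: "Y i \<in> borel_measurable M" if "i \<in> I" for i
    using rv[OF that] unfolding Y_def by measurable
  have intY: "integrable M (Y i)" if "i \<in> I" for i
    using intX[OF that] unfolding Y_def by auto
  have EY: "expectation (Y i) = 0" if "i \<in> I" for i
    using intX[OF that] mu[OF that] unfolding Y_def by (simp add: prob_space)
  have sqY: "integrable M (\<lambda>x. Y i x * Y i x)" if "i \<in> I" for i
  proof -
    have "(\<lambda>x. Y i x * Y i x) = (\<lambda>x. (X i x)^2 - 2 * \<mu> * X i x + \<mu>^2)"
      unfolding Y_def by (auto simp: power2_eq_square algebra_simps)
    then show ?thesis using sq[OF that] intX[OF that] by auto
  qed
  have indY: "indep_vars (\<lambda>_. borel) Y I"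
    unfolding Y_def by (rule indep_vars_compose2[OF ind, where Y="\<lambda>i x. x - \<mu>", simplified]) auto
  have pair: "integrable M (\<lambda>x. Y i x * Y j x) \<and> expectation (\<lambda>x. Y i x * Y j x) = 0"
    if "i \<in> I" "j \<in> I" "i \<noteq> j" for i j
  proof -
    have ij: "indep_vars (\<lambda>_. borel) Y {i, j}"
      using indep_vars_subset[OF indY] that by auto
    have "(\<lambda>x. \<Prod>k\<in>{i,j}. Y k x) = (\<lambda>x. Y i x * Y j x)" using that by auto
    moreover have "integrable M (\<lambda>x. \<Prod>k\<in>{i,j}. Y k x)"
      by (rule indep_vars_integrable[OF _ ij]) (use that intY in auto)
    moreover have "expectation (\<lambda>x. \<Prod>k\<in>{i,j}. Y k x) = (\<Prod>k\<in>{i,j}. expectation (Y k))"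
      by (rule indep_vars_lebesgue_integral[OF _ ij]) (use that intY in auto)
    ultimately show ?thesis using that EY by auto
  qed
  have intij: "integrable M (\<lambda>x. Y i x * Y j x)" if "i \<in> I" "j \<in> I" for i j
    using pair[OF that] sqY that by (cases "i = j") auto
  have sqsum: "(\<lambda>x. ((\<Sum>i\<in>I. Y i x))^2) = (\<lambda>x. \<Sum>i\<in>I. \<Sum>j\<in>I. Y i x * Y j x)"
    by (auto simp: power2_eq_square sum_product)
  have intsq: "integrable M (\<lambda>x. ((\<Sum>i\<in>I. Y i x))^2)"
    unfolding sqsum using intij by (intro Bochner_Integration.integrable_sum) auto
  have "expectation (\<lambda>x. ((\<Sum>i\<in>I. Y i x))^2) = (\<Sum>i\<in>I. \<Sum>j\<in>I. expectation (\<lambda>x. Y i x * Y j x))"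
    unfolding sqsum using intij
    by (simp add: Bochner_Integration.integral_sum Bochner_Integration.integrable_sum)
  also have "\<dots> = (\<Sum>i\<in>I. expectation (\<lambda>x. Y i x * Y i x))"
  proof (rule sum.cong[OF refl])
    fix i assume i: "i \<in> I"
    have "(\<Sum>j\<in>I. expectation (\<lambda>x. Y i x * Y j x)) = (\<Sum>j\<in>I. if j = i then expectation (\<lambda>x. Y i x * Y i x) else 0)"
      using pair i by (intro sum.cong) auto
    also have "\<dots> = expectation (\<lambda>x. Y i x * Y i x)" using fin i by simp
    finally show "(\<Sum>j\<in>I. expectation (\<lambda>x. Y i x * Y j x)) = expectation (\<lambda>x. Y i x * Y i x)" .
  qed
  also have "\<dots> \<le> (\<Sum>i\<in>I. v)"
    using var unfolding Y_def by (intro sum_mono) (auto simp: power2_eq_square)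
  also have "\<dots> = real (card I) * v" by simp
  finally have E2: "expectation (\<lambda>x. ((\<Sum>i\<in>I. Y i x))^2) \<le> real (card I) * v" .
  have eqset: "{x\<in>space M. e \<le> \<bar>(\<Sum>i\<in>I. X i x) - real (card I) * \<mu>\<bar>} = {x\<in>space M. \<bar>\<Sum>i\<in>I. Y i x\<bar> \<ge> e}"
    unfolding Y_def by (auto simp: sum_subtractf)
  have "prob {x\<in>space M. \<bar>\<Sum>i\<in>I. Y i x\<bar> \<ge> e} \<le> expectation (\<lambda>x. ((\<Sum>i\<in>I. Y i x))^2) / e^2"
    by (rule second_moment_method[OF _ intsq e]) (use rvY in auto)
  also have "\<dots> \<le> real (card I) * v / e^2"
    using E2 e by (simp add: divide_right_mono)
  finally show ?thesis unfolding eqset .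
qed



lemma geom1_int:
  fixes f :: "nat \<Rightarrow> real"
  assumes p: "0 < p" "p < 1"
    and s: "(\<lambda>n. (1-p)^n * p * f (Suc n)) sums s"
    and nn: "\<And>k. 0 \<le> f k"
  shows "integrable (measure_pmf (geom1_pmf p)) f \<and> measure_pmf.expectation (geom1_pmf p) f = s"
proof -
  have int: "integrable (count_space UNIV) (\<lambda>n. pmf (geometric_pmf p) n * f (Suc n))"
    using s p nn unfolding integrable_count_space_nat_iff
    by (subst summable_cong[where g="\<lambda>n. (1-p)^n * p * f (Suc n)"]) (auto simp: sums_iff)
  have "integrable (measure_pmf (geometric_pmf p)) (\<lambda>n. f (Suc n))"
    unfolding measure_pmf_eq_density using int p
    by (subst integrable_density) auto
  moreover have "measure_pmf.expectation (geometric_pmf p) (\<lambda>n. f (Suc n)) = s"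
  proof -
    have "measure_pmf.expectation (geometric_pmf p) (\<lambda>n. f (Suc n)) =
        (\<integral>n. pmf (geometric_pmf p) n * f (Suc n) \<partial>count_space UNIV)"
      unfolding measure_pmf_eq_density by (subst integral_density) auto
    also have "\<dots> = s"
      using int s p by (subst integral_count_space_nat) (simp_all add: sums_iff)
    finally show ?thesis .
  qed
  ultimately show ?thesis unfolding geom1_pmf_def by simp
qed

lemma sums_sq:
  fixes z :: real
  assumes "\<bar>z\<bar> < 1"
  shows "(\<lambda>n. (real (Suc n) * real (Suc (Suc n))) * z ^ n) sums (2 / (1 - z)^3)"
proof -
  have "(\<lambda>n. diffs (\<lambda>n. real (Suc n)) n * z^n) sums (2 / (1 - z)^3)"
  proof (rule termdiffs_sums_strong[where K=1])
    fix z :: real assume "norm z < 1"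
    thus "(\<lambda>n. real (Suc n) * z^n) sums (1 / (1 - z)^2)" using geometric_deriv_sums[of z] by simp
  next
    have z1: "1 - z \<noteq> 0" using assms by auto
    have "((\<lambda>z. inverse ((1 - z)^2)) has_field_derivative (- inverse ((1-z)^2) * (of_nat 2 * (1-z)^1 * (0 - 1)) * inverse ((1-z)^2))) (at z)"
      by (rule derivative_eq_intros refl | use z1 in simp)+
    moreover have "- inverse ((1-z)^2) * (of_nat 2 * (1-z)^1 * (0 - 1)) * inverse ((1-z)^2) = 2 / (1 - z)^3"
    proof -
      define w where "w = 1 - z"
      have w: "w \<noteq> 0" using z1 w_def by auto
      have "- inverse (w^2) * (of_nat 2 * w^1 * (0 - 1)) * inverse (w^2) = 2 / w^3"
        using w by (simp add: divide_simps power2_eq_square power3_eq_cube)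
      then show ?thesis unfolding w_def .
    qed
    ultimately show "((\<lambda>z. 1 / (1 - z)^2) has_field_derivative (2 / (1 - z)^3)) (at z)"
      by (simp add: divide_inverse)
  qed (use assms in auto)
  thus ?thesis unfolding diffs_def by (simp add: mult_ac)
qed

lemma geom1_moments:
  assumes p: "0 < p" "p < 1"
  shows "integrable (measure_pmf (geom1_pmf p)) (\<lambda>k. real k)"
    and "measure_pmf.expectation (geom1_pmf p) (\<lambda>k. real k) = 1 / p"
    and "integrable (measure_pmf (geom1_pmf p)) (\<lambda>k. (real k)^2)"
    and "measure_pmf.expectation (geom1_pmf p) (\<lambda>k. (real k - 1/p)^2) = (1 - p) / p^2"
proof -
  have z: "\<bar>1 - p\<bar> < 1" using p by auto
  have A: "(\<lambda>n. (1-p)^n) sums (1 / p)" using geometric_sums[of "1-p"] z by simp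
  have B: "(\<lambda>n. real (Suc n) * (1-p)^n) sums (1 / p^2)" using geometric_deriv_sums[of "1-p"] z by simp
  have C: "(\<lambda>n. (real (Suc n) * real (Suc (Suc n))) * (1-p)^n) sums (2 / p^3)" using sums_sq[OF z] by simp
  have B1: "(\<lambda>n. (1-p)^n * p * real (Suc n)) sums (1 / p)"
    using sums_mult[OF B, of p] p by (simp add: mult_ac power2_eq_square)
  have C1: "(\<lambda>n. (1-p)^n * p * (real (Suc n))^2) sums ((2 - p) / p^2)"
  proof -
    have "(\<lambda>n. p * ((real (Suc n) * real (Suc (Suc n))) * (1-p)^n) - p * (real (Suc n) * (1-p)^n))
       sums (p * (2 / p^3) - p * (1 / p^2))"
      by (intro sums_diff sums_mult C B)
    moreover have "p * (2 / p^3) - p * (1 / p^2) = (2 - p) / p^2"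
      using p by (simp add: field_simps power2_eq_square power3_eq_cube)
    moreover have "(\<lambda>n. p * ((real (Suc n) * real (Suc (Suc n))) * (1-p)^n) - p * (real (Suc n) * (1-p)^n))
       = (\<lambda>n. (1-p)^n * p * (real (Suc n))^2)"
      by (auto simp: algebra_simps power2_eq_square)
    ultimately show ?thesis by simp
  qed
  have D1: "(\<lambda>n. (1-p)^n * p * (real (Suc n) - 1/p)^2) sums ((1 - p) / p^2)"
  proof -
    have "(\<lambda>n. (1-p)^n * p * (real (Suc n))^2 - (2/p) * ((1-p)^n * p * real (Suc n)) + (1/p) * (1-p)^n)
       sums ((2 - p) / p^2 - (2/p) * (1/p) + (1/p) * (1/p))"
      by (intro sums_add sums_diff sums_mult C1 B1 A)
    moreover have "(2 - p) / p^2 - (2/p) * (1/p) + (1/p) * (1/p) = (1 - p) / p^2"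
      using p by (simp add: field_simps power2_eq_square)
    moreover have "(\<lambda>n. (1-p)^n * p * (real (Suc n))^2 - (2/p) * ((1-p)^n * p * real (Suc n)) + (1/p) * (1-p)^n)
       = (\<lambda>n. (1-p)^n * p * (real (Suc n) - 1/p)^2)"
      using p by (auto simp: algebra_simps power2_eq_square)
    ultimately show ?thesis by simp
  qed
  show "integrable (measure_pmf (geom1_pmf p)) (\<lambda>k. real k)"
    "measure_pmf.expectation (geom1_pmf p) (\<lambda>k. real k) = 1 / p"
    using geom1_int[OF p B1] by auto
  show "integrable (measure_pmf (geom1_pmf p)) (\<lambda>k. (real k)^2)"
    using geom1_int[OF p C1] by auto
  show "measure_pmf.expectation (geom1_pmf p) (\<lambda>k. (real k - 1/p)^2) = (1 - p) / p^2"
    using geom1_int[OF p D1] by auto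
qed

lemma geom1_tail:
  assumes p: "0 < p" "p < 1" and j: "j \<ge> 1"
  shows "measure_pmf.prob (geom1_pmf p) {k. j \<le> k} = (1 - p)^(j - 1)"
proof -
  have "measure_pmf.prob (geom1_pmf p) {k. j \<le> k} = measure_pmf.prob (geometric_pmf p) {k. j - 1 \<le> k}"
    unfolding geom1_pmf_def measure_map_pmf using j by (intro arg_cong[where f="measure_pmf.prob _"]) auto
  also have "{k. j - 1 \<le> k} = UNIV - {..<j-1}" by auto
  also have "measure_pmf.prob (geometric_pmf p) (UNIV - {..<j-1}) = 1 - measure_pmf.prob (geometric_pmf p) {..<j-1}"
    by (subst measure_pmf.finite_measure_Diff) auto
  also have "measure_pmf.prob (geometric_pmf p) {..<j-1} = (\<Sum>k<j-1. (1-p)^k * p)"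
    using p by (subst measure_measure_pmf_finite) auto
  also have "\<dots> = 1 - (1-p)^(j-1)"
    using p by (simp add: sum_distrib_right[symmetric] sum_gp_strict)
  finally show ?thesis by simp
qed



lemma asym_np:
  fixes p :: "nat \<Rightarrow> real"
  assumes lim: "(\<lambda>n. p n * log 2 (real n)) \<longlonglongrightarrow> \<alpha>" and a: "0 < \<alpha>"
  shows "filterlim (\<lambda>n. real n * p n) at_top sequentially"
proof -
  have f: "filterlim (\<lambda>n. real n / log 2 (real n)) at_top sequentially" by real_asymp
  have "filterlim (\<lambda>n. p n * log 2 (real n) * (real n / log 2 (real n))) at_top sequentially"
    by (rule filterlim_tendsto_pos_mult_at_top[OF lim a f])
  moreover have "eventually (\<lambda>n. p n * log 2 (real n) * (real n / log 2 (real n)) = real n * p n) sequentially"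
    using eventually_ge_at_top[of "2::nat"]
  proof eventually_elim
    case (elim n)
    then have "log 2 (real n) > 0" by (subst zero_less_log_cancel_iff) auto
    then have "log 2 (real n) \<noteq> 0" by simp
    then show ?case by (simp add: field_simps)
  qed
  ultimately show ?thesis by (rule filterlim_cong[OF refl refl, THEN iffD1, rotated])
qed

lemma asym_p0:
  fixes p :: "nat \<Rightarrow> real"
  assumes lim: "(\<lambda>n. p n * log 2 (real n)) \<longlonglongrightarrow> \<alpha>"
  shows "p \<longlonglongrightarrow> 0"
proof -
  have f: "(\<lambda>n. 1 / log 2 (real n)) \<longlonglongrightarrow> 0" by real_asymp
  have "(\<lambda>n. p n * log 2 (real n) * (1 / log 2 (real n))) \<longlonglongrightarrow> \<alpha> * 0"
    by (rule tendsto_mult[OF lim f])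
  moreover have "eventually (\<lambda>n. p n * log 2 (real n) * (1 / log 2 (real n)) = p n) sequentially"
    using eventually_ge_at_top[of "2::nat"]
  proof eventually_elim
    case (elim n)
    then have "log 2 (real n) > 0" by (subst zero_less_log_cancel_iff) auto
    then have "log 2 (real n) \<noteq> 0" by simp
    then show ?case by (simp add: field_simps)
  qed
  ultimately show ?thesis by (simp add: Lim_transform_eventually)
qed

lemma asym_q:
  fixes p :: "nat \<Rightarrow> real"
  assumes lim: "(\<lambda>n. p n * log 2 (real n)) \<longlonglongrightarrow> \<alpha>"
    and pr: "\<And>n. 0 < p n \<and> p n < 1" and g: "0 < \<gamma>"
  shows "(\<lambda>n. (1 - p n) ^ (nat \<lceil>\<gamma> * log 2 (real n)\<rceil> - 1)) \<longlonglongrightarrow> exp (- \<alpha> * \<gamma>)"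
proof -
  define L where "L n = ln (1 - p n)" for n
  define t where "t n = \<gamma> * log 2 (real n)" for n
  have p0: "p \<longlonglongrightarrow> 0" by (rule asym_p0[OF lim])
  have L0: "L \<longlonglongrightarrow> 0"
  proof -
    have "(\<lambda>n. ln (1 - p n)) \<longlonglongrightarrow> ln (1 - 0)"
      by (intro tendsto_ln tendsto_diff tendsto_const p0) auto
    thus ?thesis unfolding L_def by simp
  qed
  have Lup: "L n \<le> - p n" for n
    using ln_le_minus_one[of "1 - p n"] pr[of n] unfolding L_def by auto
  have Llo: "L n \<ge> - (p n / (1 - p n))" for n
  proof -
    have "ln (1 / (1 - p n)) \<le> 1 / (1 - p n) - 1" using pr[of n] by (intro ln_le_minus_one) auto
    moreover have "ln (1 / (1 - p n)) = - L n" unfolding L_def using pr[of n] by (simp add: ln_div)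
    moreover have "1 / (1 - p n) - 1 = p n / (1 - p n)" using pr[of n] by (simp add: field_simps)
    ultimately show ?thesis by simp
  qed
  have tL: "(\<lambda>n. t n * L n) \<longlonglongrightarrow> - \<alpha> * \<gamma>"
  proof (rule tendsto_sandwich)
    show "eventually (\<lambda>n. - \<gamma> * (p n * log 2 (real n)) / (1 - p n) \<le> t n * L n) sequentially"
      using eventually_ge_at_top[of "1::nat"]
    proof eventually_elim
      case (elim n)
      have "0 \<le> t n" unfolding t_def using g elim by auto
      from mult_left_mono[OF Llo[of n] this] show ?case unfolding t_def by (simp add: field_simps)
    qed
    show "eventually (\<lambda>n. t n * L n \<le> - \<gamma> * (p n * log 2 (real n))) sequentially"
      using eventually_ge_at_top[of "1::nat"]
    proof eventually_elim
      case (elim n)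
      have "0 \<le> t n" unfolding t_def using g elim by auto
      from mult_left_mono[OF Lup[of n] this] show ?case unfolding t_def by (simp add: field_simps)
    qed
    have "(\<lambda>n. - \<gamma> * (p n * log 2 (real n)) / (1 - p n)) \<longlonglongrightarrow> - \<gamma> * \<alpha> / (1 - 0)"
      by (intro tendsto_intros lim p0) auto
    then show "(\<lambda>n. - \<gamma> * (p n * log 2 (real n)) / (1 - p n)) \<longlonglongrightarrow> - \<alpha> * \<gamma>" by (simp add: mult_ac)
    have "(\<lambda>n. - \<gamma> * (p n * log 2 (real n))) \<longlonglongrightarrow> - \<gamma> * \<alpha>"
      by (intro tendsto_intros lim)
    then show "(\<lambda>n. - \<gamma> * (p n * log 2 (real n))) \<longlonglongrightarrow> - \<alpha> * \<gamma>" by (simp add: mult_ac)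
  qed
  define j where "j n = nat \<lceil>t n\<rceil> - 1" for n
  have main: "(\<lambda>n. real (j n) * L n) \<longlonglongrightarrow> - \<alpha> * \<gamma>"
  proof (rule tendsto_sandwich)
    have tL2: "(\<lambda>n. t n * L n - L n) \<longlonglongrightarrow> - \<alpha> * \<gamma> - 0"
      by (intro tendsto_diff tL L0)
    show "(\<lambda>n. t n * L n) \<longlonglongrightarrow> - \<alpha> * \<gamma>" by (rule tL)
    show "(\<lambda>n. t n * L n - L n) \<longlonglongrightarrow> - \<alpha> * \<gamma>" using tL2 by simp
    have ev: "eventually (\<lambda>n. t n - 1 \<le> real (j n) \<and> real (j n) \<le> t n \<and> L n \<le> 0) sequentially"
      using eventually_ge_at_top[of "2::nat"]
    proof eventually_elim
      case (elim n)
      have tp: "t n > 0" unfolding t_def using g elim by auto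
      have "L n \<le> 0" using Lup[of n] pr[of n] by auto
      moreover have c1: "\<lceil>t n\<rceil> \<ge> 1" using tp by simp
      moreover have "t n \<le> \<lceil>t n\<rceil>" "\<lceil>t n\<rceil> < t n + 1" using ceiling_correct[of "t n"] by linarith+
      moreover have "real (j n) = real_of_int \<lceil>t n\<rceil> - 1"
      proof -
        have "nat \<lceil>t n\<rceil> - 1 = nat (\<lceil>t n\<rceil> - 1)" using c1 by (simp add: nat_diff_distrib)
        then show ?thesis using c1 unfolding j_def by simp
      qed
      ultimately show ?case by auto
    qed
    show "eventually (\<lambda>n. t n * L n \<le> real (j n) * L n) sequentially"
    proof (rule eventually_mono[OF ev])
      fix n assume h: "t n - 1 \<le> real (j n) \<and> real (j n) \<le> t n \<and> L n \<le> 0"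
      then show "t n * L n \<le> real (j n) * L n" by (intro mult_right_mono_neg) auto
    qed
    show "eventually (\<lambda>n. real (j n) * L n \<le> t n * L n - L n) sequentially"
    proof (rule eventually_mono[OF ev])
      fix n assume h: "t n - 1 \<le> real (j n) \<and> real (j n) \<le> t n \<and> L n \<le> 0"
      then have "real (j n) * L n \<le> (t n - 1) * L n" by (intro mult_right_mono_neg) auto
      then show "real (j n) * L n \<le> t n * L n - L n" by (simp add: algebra_simps)
    qed
  qed
  have "(\<lambda>n. exp (real (j n) * L n)) \<longlonglongrightarrow> exp (- \<alpha> * \<gamma>)"
    by (intro tendsto_exp main)
  moreover have "exp (real (j n) * L n) = (1 - p n) ^ (nat \<lceil>\<gamma> * log 2 (real n)\<rceil> - 1)" for n
  proof -
    have "exp (real (j n) * L n) = exp (L n) ^ (j n)" by (rule exp_of_nat_mult)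
    also have "exp (L n) = 1 - p n" unfolding L_def using pr[of n] by simp
    finally show ?thesis unfolding j_def t_def .
  qed
  ultimately show ?thesis by (simp only:)
qed


lemma det_frag:
  fixes N :: "nat \<Rightarrow> nat"
  assumes A: "(\<Sum>i=1..a. real (N i)) < real n" and B: "real n \<le> (\<Sum>i=1..b. real (N i))"
  shows "a < num_fragments n N \<and> num_fragments n N \<le> b"
proof -
  let ?P = "\<lambda>k. real n \<le> (\<Sum>i=1..k. real (N i))"
  have PK: "?P (num_fragments n N)" unfolding num_fragments_def by (rule LeastI[of ?P b]) (rule B)
  have Kb: "num_fragments n N \<le> b" unfolding num_fragments_def by (rule Least_le) (rule B)
  have "a < num_fragments n N"
  proof (rule ccontr)
    assume "\<not> a < num_fragments n N"
    then have "(\<Sum>i=1..num_fragments n N. real (N i)) \<le> (\<Sum>i=1..a. real (N i))"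
      by (intro sum_mono2) auto
    with PK A show False by linarith
  qed
  with Kb show ?thesis by blast
qed

lemma card_sum_ind:
  assumes "finite A"
  shows "real (card {i \<in> A. c \<le> real (f i)}) = (\<Sum>i\<in>A. indicator {k::nat. c \<le> real k} (f i))"
proof -
  have "(\<Sum>i\<in>A. indicator {k::nat. c \<le> real k} (f i)) = (\<Sum>i\<in>A. if c \<le> real (f i) then 1 else (0::real))"
    by (intro sum.cong) (auto simp: indicator_def)
  also have "\<dots> = (\<Sum>i\<in>{i \<in> A. c \<le> real (f i)}. 1)"
    by (rule sum.inter_filter[symmetric, OF assms])
  finally show ?thesis by simp
qed

lemma transfer_nat:
  fixes f :: "nat \<Rightarrow> real"
  assumes X: "X \<in> measurable M (count_space UNIV)" and d: "distr M (count_space UNIV) X = measure_pmf Q"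
  shows "integrable M (\<lambda>\<omega>. f (X \<omega>)) \<longleftrightarrow> integrable (measure_pmf Q) f"
    and "(\<integral>\<omega>. f (X \<omega>) \<partial>M) = measure_pmf.expectation Q f"
proof -
  show "integrable M (\<lambda>\<omega>. f (X \<omega>)) \<longleftrightarrow> integrable (measure_pmf Q) f"
    using integrable_distr_eq[OF X, of f] d by simp
  show "(\<integral>\<omega>. f (X \<omega>) \<partial>M) = measure_pmf.expectation Q f"
    using integral_distr[OF X, of f] d by simp
qed


theorem lemma4:
  fixes M :: "'a measure"
    and N :: "nat \<Rightarrow> nat \<Rightarrow> 'a \<Rightarrow> nat"
    and p :: "nat \<Rightarrow> real"
    and \<alpha> \<gamma> \<epsilon> :: real
  assumes M: "prob_space M"
    and indep: "\<And>n. prob_space.indep_vars M (\<lambda>_. count_space UNIV) (N n) UNIV"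
    and distr: "\<And>n i. distr M (count_space UNIV) (N n i) = measure_pmf (geom1_pmf (p n))"
    and p_range: "\<And>n. 0 < p n \<and> p n < 1"
    and lim: "(\<lambda>n. p n * log 2 (real n)) \<longlonglongrightarrow> \<alpha>"
    and \<alpha>_pos: "0 < \<alpha>"
    and \<gamma>_pos: "0 < \<gamma>"
    and \<epsilon>_pos: "0 < \<epsilon>"
  shows "(\<lambda>n. measure M {\<omega> \<in> space M.
            \<bar>real (num_long_fragments \<gamma> n (\<lambda>i. N n i \<omega>)) - exp (- \<alpha> * \<gamma>) * real n * p n\<bar>
              > \<epsilon> * real n * p n}) \<longlonglongrightarrow> 0"
proof -
  interpret P: prob_space M by (rule M)
  have Nm[measurable]: "N n i \<in> measurable M (count_space UNIV)" for n i
    using indep[of n] unfolding P.indep_vars_def by blast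
  define e0 where "e0 = exp (- \<alpha> * \<gamma>)"
  define \<delta> where "\<delta> = min (\<epsilon>/4) (1/2)"
  have d0: "0 < \<delta>" "\<delta> \<le> \<epsilon>/4" "\<delta> \<le> 1/2" using \<epsilon>_pos by (auto simp: \<delta>_def)
  define z where "z n = real n * p n" for n
  define t where "t n = \<gamma> * log 2 (real n)" for n
  define q where "q n = (1 - p n) ^ (nat \<lceil>t n\<rceil> - 1)" for n
  define w where "w n = 1 / z n" for n
  define B where "B n = (2 * (2 + \<delta>) / \<delta>^2) * w n + (2 / \<delta>^2) * (w n)^2" for n
  define bad where "bad n = {\<omega> \<in> space M. \<bar>real (num_long_fragments \<gamma> n (\<lambda>i. N n i \<omega>)) - exp (- \<alpha> * \<gamma>) * real n * p n\<bar> > \<epsilon> * real n * p n}" for n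
  have zlim: "filterlim z at_top sequentially" unfolding z_def by (rule asym_np[OF lim \<alpha>_pos])
  have qlim: "q \<longlonglongrightarrow> e0" unfolding q_def t_def e0_def by (rule asym_q[OF lim p_range \<gamma>_pos])
  have wlim: "w \<longlonglongrightarrow> 0"
  proof -
    have "w = (\<lambda>x. inverse (z x))" by (simp add: w_def[abs_def] fun_eq_iff field_simps)
    then show ?thesis using tendsto_inverse_0_at_top[OF zlim] by simp
  qed
  have Blim: "B \<longlonglongrightarrow> 0"
  proof -
    have "B \<longlonglongrightarrow> (2 * (2 + \<delta>) / \<delta>^2) * 0 + (2 / \<delta>^2) * 0^2"
      unfolding B_def[abs_def] by (intro tendsto_intros wlim)
    then show ?thesis by simp
  qed
  have key: "measure M (bad n) \<le> B n"
    if n2: "n \<ge> 2" and z1: "z n \<ge> 1" and qb1: "e0 - \<epsilon>/4 < q n" and qb2: "q n < e0 + \<epsilon>/4"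
      and wb: "w n < \<epsilon>/4" for n
  proof -

    have p: "0 < p n" "p n < 1" using p_range[of n] by auto
    have n0: "real n > 0" using n2 by simp
    have zpos: "z n > 0" unfolding z_def using n0 p by simp
    have wz: "w n * z n = 1" unfolding w_def using zpos by simp
    have tpos: "t n > 0" unfolding t_def using n2 \<gamma>_pos by simp
    define a where "a = nat \<lfloor>(1 - \<delta>) * z n\<rfloor>"
    define b where "b = nat \<lceil>(1 + \<delta>) * z n\<rceil>"
    have a1: "real a \<le> (1 - \<delta>) * z n" "(1 - \<delta>) * z n - 1 \<le> real a"
    proof -
      have nn: "0 \<le> (1 - \<delta>) * z n" using d0 zpos by simp
      then show "real a \<le> (1 - \<delta>) * z n" unfolding a_def by linarith
      show "(1 - \<delta>) * z n - 1 \<le> real a" using nn unfolding a_def by linarith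
    qed
    have dz: "0 \<le> \<delta> * z n" using d0 zpos by simp
    have a2: "real a \<le> z n"
    proof -
      have "(1 - \<delta>) * z n = z n - \<delta> * z n" by (simp add: algebra_simps)
      then show ?thesis using a1 dz by linarith
    qed
    have b1: "(1 + \<delta>) * z n \<le> real b" "real b \<le> (1 + \<delta>) * z n + 1"
    proof -
      have nn: "0 \<le> (1 + \<delta>) * z n" using d0 zpos by simp
      then show "(1 + \<delta>) * z n \<le> real b" unfolding b_def by linarith
      show "real b \<le> (1 + \<delta>) * z n + 1" using nn unfolding b_def by linarith
    qed
    have q01: "0 \<le> q n" "q n \<le> 1" unfolding q_def using p by (auto intro: power_le_one)
    define A where "A = {k::nat. t n \<le> real k}"
    define X1 where "X1 i \<omega> = real (N n i \<omega>)" for i \<omega>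
    define X2 where "X2 i \<omega> = (indicator A (N n i \<omega>) :: real)" for i \<omega>
    have X1m[measurable]: "X1 i \<in> borel_measurable M" for i unfolding X1_def by measurable
    have X2m[measurable]: "X2 i \<in> borel_measurable M" for i unfolding X2_def by measurable
    have ind1: "P.indep_vars (\<lambda>_. borel) X1 I" for I
      unfolding X1_def
      by (rule P.indep_vars_subset[OF P.indep_vars_compose2[OF indep[of n], where Y="\<lambda>_ k. real k"]]) auto
    have ind2: "P.indep_vars (\<lambda>_. borel) X2 I" for I
      unfolding X2_def
      by (rule P.indep_vars_subset[OF P.indep_vars_compose2[OF indep[of n], where Y="\<lambda>_ k. indicator A k"]]) auto
    note mom = geom1_moments[OF p]
    note tr = transfer_nat[OF Nm distr]
    have X1sq: "integrable M (\<lambda>x. (X1 i x)^2)" for i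
      unfolding X1_def using tr(1)[of "\<lambda>k. (real k)^2"] mom(3) by simp
    have X1mu: "P.expectation (X1 i) = 1 / p n" for i
      unfolding X1_def using tr(2)[of "\<lambda>k. real k"] mom(2) by simp
    have X1var: "P.expectation (\<lambda>x. (X1 i x - 1 / p n)^2) \<le> (1 - p n) / (p n)^2" for i
      unfolding X1_def using tr(2)[of "\<lambda>k. (real k - 1 / p n)^2"] mom(4) by simp
    have X2b: "X2 i x \<in> {0..1}" for i x unfolding X2_def by (auto simp: indicator_def)
    have X2sq: "integrable M (\<lambda>x. (X2 i x)^2)" for i
      by (rule P.integrable_const_bound[where B=1]) (use X2b in \<open>auto simp: power_le_one\<close>)
    have Aeq: "A = {k. nat \<lceil>t n\<rceil> \<le> k}"
      unfolding A_def by (auto simp: ceiling_le_iff nat_le_iff)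
    have X2mu: "P.expectation (X2 i) = q n" for i
    proof -
      have "P.expectation (X2 i) = measure_pmf.expectation (geom1_pmf (p n)) (indicator A)"
        unfolding X2_def using tr(2)[of "indicator A"] by simp
      also have "\<dots> = measure_pmf.prob (geom1_pmf (p n)) A" by simp
      also have "\<dots> = q n"
      proof -
        have c1: "\<lceil>t n\<rceil> \<ge> 1" using tpos by simp
        then have "nat \<lceil>t n\<rceil> \<ge> 1" using tpos by (subst le_nat_iff) auto
        then show ?thesis unfolding Aeq q_def by (subst geom1_tail[OF p]) auto
      qed
      finally show ?thesis .
    qed
    have X2var: "P.expectation (\<lambda>x. (X2 i x - q n)^2) \<le> 1" for i
    proof (rule P.integral_le_const)
      have sqb: "(X2 i x - q n)^2 \<le> 1" for x
      proof -
        have "\<bar>X2 i x - q n\<bar> \<le> 1" using X2b[of i x] q01 by (auto simp: abs_le_iff)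
        then show ?thesis by (metis abs_ge_zero power2_abs power_le_one)
      qed
      show "integrable M (\<lambda>x. (X2 i x - q n)^2)"
        by (rule P.integrable_const_bound[where B=1]) (use sqb in auto)
      show "AE x in M. (X2 i x - q n)^2 \<le> 1"
        using sqb by simp
    qed

    define E1 where "E1 = {x\<in>space M. \<delta> * real n \<le> \<bar>(\<Sum>i\<in>{1..a}. X1 i x) - real (card {1..a}) * (1 / p n)\<bar>}"
    define E2 where "E2 = {x\<in>space M. \<delta> * real n \<le> \<bar>(\<Sum>i\<in>{1..b}. X1 i x) - real (card {1..b}) * (1 / p n)\<bar>}"
    define E3 where "E3 = {x\<in>space M. \<delta> * z n \<le> \<bar>(\<Sum>i\<in>{1..a}. X2 i x) - real (card {1..a}) * q n\<bar>}"
    define E4 where "E4 = {x\<in>space M. \<delta> * z n \<le> \<bar>(\<Sum>i\<in>{1..b}. X2 i x) - real (card {1..b}) * q n\<bar>}"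
    have dn: "\<delta> * real n > 0" using d0 n0 by simp
    have dz': "\<delta> * z n > 0" using d0 zpos by simp
    have P1: "measure M E1 \<le> real (card {1..a}) * ((1 - p n) / (p n)^2) / (\<delta> * real n)^2"
      unfolding E1_def by (rule P.cheb_indep_sum[OF _ ind1 X1sq X1mu X1var dn]) auto
    have P2: "measure M E2 \<le> real (card {1..b}) * ((1 - p n) / (p n)^2) / (\<delta> * real n)^2"
      unfolding E2_def by (rule P.cheb_indep_sum[OF _ ind1 X1sq X1mu X1var dn]) auto
    have P3: "measure M E3 \<le> real (card {1..a}) * 1 / (\<delta> * z n)^2"
      unfolding E3_def by (rule P.cheb_indep_sum[OF _ ind2 X2sq X2mu X2var dz']) auto
    have P4: "measure M E4 \<le> real (card {1..b}) * 1 / (\<delta> * z n)^2"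
      unfolding E4_def by (rule P.cheb_indep_sum[OF _ ind2 X2sq X2mu X2var dz']) auto
    have E1m: "E1 \<in> sets M" unfolding E1_def by measurable
    have E2m: "E2 \<in> sets M" unfolding E2_def by measurable
    have E3m: "E3 \<in> sets M" unfolding E3_def by measurable
    have E4m: "E4 \<in> sets M" unfolding E4_def by measurable
    have pn2: "(p n)^2 * (real n)^2 = (z n)^2" unfolding z_def by (simp add: power_mult_distrib)
    have Q1: "real (card {1..a}) * ((1 - p n) / (p n)^2) / (\<delta> * real n)^2 \<le> w n / \<delta>^2"
    proof -
      have "real (card {1..a}) * ((1 - p n) / (p n)^2) / (\<delta> * real n)^2 \<le> z n * (1 / (p n)^2) / (\<delta> * real n)^2"
        using a2 p by (intro divide_right_mono mult_mono) (auto simp: divide_right_mono)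
      also have "\<dots> = w n / \<delta>^2"
        unfolding w_def z_def using p n0 d0 by (simp add: field_simps power2_eq_square)
      finally show ?thesis .
    qed
    have Q2: "real (card {1..b}) * ((1 - p n) / (p n)^2) / (\<delta> * real n)^2 \<le> (1 + \<delta>) * w n / \<delta>^2 + (w n)^2 / \<delta>^2"
    proof -
      have "real (card {1..b}) * ((1 - p n) / (p n)^2) / (\<delta> * real n)^2 \<le> ((1 + \<delta>) * z n + 1) * (1 / (p n)^2) / (\<delta> * real n)^2"
        using b1 p by (intro divide_right_mono mult_mono) (auto simp: divide_right_mono)
      also have "\<dots> = (1 + \<delta>) * w n / \<delta>^2 + (w n)^2 / \<delta>^2"
        unfolding w_def z_def using p n0 d0 by (simp add: field_simps power2_eq_square)
      finally show ?thesis .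
    qed
    have Q3: "real (card {1..a}) * 1 / (\<delta> * z n)^2 \<le> w n / \<delta>^2"
    proof -
      have "real (card {1..a}) * 1 / (\<delta> * z n)^2 \<le> z n / (\<delta> * z n)^2"
        using a2 by (intro divide_right_mono) auto
      also have "\<dots> = w n / \<delta>^2"
        unfolding w_def using zpos d0 by (simp add: field_simps power2_eq_square)
      finally show ?thesis .
    qed
    have Q4: "real (card {1..b}) * 1 / (\<delta> * z n)^2 \<le> (1 + \<delta>) * w n / \<delta>^2 + (w n)^2 / \<delta>^2"
    proof -
      have "real (card {1..b}) * 1 / (\<delta> * z n)^2 \<le> ((1 + \<delta>) * z n + 1) / (\<delta> * z n)^2"
        using b1 by (intro divide_right_mono) auto
      also have "\<dots> = (1 + \<delta>) * w n / \<delta>^2 + (w n)^2 / \<delta>^2"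
        unfolding w_def using zpos d0 by (simp add: field_simps power2_eq_square)
      finally show ?thesis .
    qed
    have Bsum: "w n / \<delta>^2 + ((1 + \<delta>) * w n / \<delta>^2 + (w n)^2 / \<delta>^2) + w n / \<delta>^2
        + ((1 + \<delta>) * w n / \<delta>^2 + (w n)^2 / \<delta>^2) = B n"
      unfolding B_def using d0 by (simp add: field_simps power2_eq_square)
    have incl: "bad n \<subseteq> E1 \<union> E2 \<union> E3 \<union> E4"
    proof
      fix \<omega> assume bad: "\<omega> \<in> bad n"
      then have sp: "\<omega> \<in> space M" unfolding bad_def by simp
      show "\<omega> \<in> E1 \<union> E2 \<union> E3 \<union> E4"
      proof (rule ccontr)
        assume "\<omega> \<notin> E1 \<union> E2 \<union> E3 \<union> E4"
        then have n1: "\<bar>(\<Sum>i=1..a. real (N n i \<omega>)) - real a * (1 / p n)\<bar> < \<delta> * real n"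
          and n2': "\<bar>(\<Sum>i=1..b. real (N n i \<omega>)) - real b * (1 / p n)\<bar> < \<delta> * real n"
          and n3: "\<bar>(\<Sum>i=1..a. X2 i \<omega>) - real a * q n\<bar> < \<delta> * z n"
          and n4: "\<bar>(\<Sum>i=1..b. X2 i \<omega>) - real b * q n\<bar> < \<delta> * z n"
          using sp unfolding E1_def E2_def E3_def E4_def X1_def by auto
        have ap: "real a * (1 / p n) \<le> (1 - \<delta>) * real n"
        proof -
          have "real a \<le> (1 - \<delta>) * real n * p n" using a1(1) unfolding z_def by (simp add: mult_ac)
          then show ?thesis using p by (simp add: field_simps)
        qed
        have bp: "(1 + \<delta>) * real n \<le> real b * (1 / p n)"
        proof -
          have "(1 + \<delta>) * real n * p n \<le> real b" using b1(1) unfolding z_def by (simp add: mult_ac)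
          then show ?thesis using p by (simp add: field_simps)
        qed
        have e1: "(1 - \<delta>) * real n = real n - \<delta> * real n" "(1 + \<delta>) * real n = real n + \<delta> * real n"
          by (simp_all add: algebra_simps)
        have Sa: "(\<Sum>i=1..a. real (N n i \<omega>)) < real n"
          using le_less_trans[OF abs_ge_self n1] ap e1 by linarith
        have Sb: "real n \<le> (\<Sum>i=1..b. real (N n i \<omega>))"
        proof -
          have h: "- ((\<Sum>i=1..b. real (N n i \<omega>)) - real b * (1 / p n)) < \<delta> * real n"
            by (rule le_less_trans[OF abs_ge_minus_self n2'])
          show ?thesis using h bp e1(2) by linarith
        qed
        define K where "K = num_fragments n (\<lambda>i. N n i \<omega>)"
        have K: "a < K" "K \<le> b" using det_frag[OF Sa Sb] unfolding K_def by auto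
        define CK where "CK = real (num_long_fragments \<gamma> n (\<lambda>i. N n i \<omega>))"
        have CK: "CK = real (card {i \<in> {1..K}. t n \<le> real (N n i \<omega>)})"
          unfolding CK_def num_long_fragments_def K_def t_def ..
        have Cs: "(\<Sum>i=1..m. X2 i \<omega>) = real (card {i \<in> {1..m}. t n \<le> real (N n i \<omega>)})" for m
          unfolding X2_def A_def by (rule card_sum_ind[symmetric]) simp
        have Ca: "(\<Sum>i=1..a. X2 i \<omega>) \<le> CK"
          unfolding CK Cs using K by (intro of_nat_mono card_mono) auto
        have Cb: "CK \<le> (\<Sum>i=1..b. X2 i \<omega>)"
          unfolding CK Cs using K by (intro of_nat_mono card_mono) auto
        define Z where "Z = z n"
        define Q where "Q = q n"
        have Z0: "Z > 0" "0 \<le> \<delta> * Z" using zpos d0 unfolding Z_def by auto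
        have Q01: "0 \<le> Q" "Q \<le> 1" using q01 unfolding Q_def by auto
        have f1: "real b * Q \<le> ((1 + \<delta>) * Z + 1) * Q" using b1 Q01 unfolding Z_def by (intro mult_right_mono) auto
        have f1e: "((1 + \<delta>) * Z + 1) * Q = Z * Q + \<delta> * Z * Q + Q" by (simp add: algebra_simps)
        have f2: "\<delta> * Z * Q \<le> \<delta> * Z" using mult_left_mono[OF Q01(2) Z0(2)] by simp
        have f3: "Z * Q \<le> Z * (e0 + \<epsilon>/4)" using qb2 Z0 unfolding Q_def by (intro mult_left_mono) auto
        have f3': "Z * (e0 - \<epsilon>/4) \<le> Z * Q" using qb1 Z0 unfolding Q_def by (intro mult_left_mono) auto
        have f3e: "Z * (e0 + \<epsilon>/4) = Z * e0 + Z * (\<epsilon>/4)" "Z * (e0 - \<epsilon>/4) = Z * e0 - Z * (\<epsilon>/4)"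
          by (rule distrib_left, rule right_diff_distrib)
        have f4: "\<delta> * Z \<le> Z * (\<epsilon>/4)" using d0 Z0 by (simp add: mult.commute mult_left_mono)
        have f5: "1 \<le> Z * (\<epsilon>/4)"
        proof -
          have "w n * Z < (\<epsilon>/4) * Z" using wb Z0 by (intro mult_strict_right_mono) auto
          then show ?thesis using wz unfolding Z_def by (simp add: mult.commute)
        qed
        have f6: "((1 - \<delta>) * Z - 1) * Q \<le> real a * Q" using a1 Q01 unfolding Z_def by (intro mult_right_mono) auto
        have f6e: "((1 - \<delta>) * Z - 1) * Q = Z * Q - \<delta> * Z * Q - Q" by (simp add: algebra_simps)
        have g: "e0 * real n * p n = Z * e0" "\<epsilon> * real n * p n = 4 * (Z * (\<epsilon>/4))"
          unfolding Z_def z_def by (simp_all add: algebra_simps)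
        have n3': "\<bar>(\<Sum>i=1..a. X2 i \<omega>) - real a * Q\<bar> < \<delta> * Z" using n3 unfolding Q_def Z_def .
        have n4': "\<bar>(\<Sum>i=1..b. X2 i \<omega>) - real b * Q\<bar> < \<delta> * Z" using n4 unfolding Q_def Z_def .
        have "\<bar>CK - e0 * real n * p n\<bar> \<le> \<epsilon> * real n * p n"
          unfolding g abs_le_iff using Ca Cb le_less_trans[OF abs_ge_self n4'] le_less_trans[OF abs_ge_minus_self n3']
            f1[unfolded f1e] f2 f3[unfolded f3e(1)] f3'[unfolded f3e(2)] f4 f5 f6[unfolded f6e] Q01 by linarith
        then show False using bad unfolding bad_def CK_def e0_def by auto
      qed
    qed
    have "measure M (bad n) \<le> measure M (E1 \<union> E2 \<union> E3 \<union> E4)"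
    proof (cases "bad n \<in> sets M")
      case True
      then show ?thesis using incl E1m E2m E3m E4m by (intro P.finite_measure_mono) auto
    next
      case False
      then show ?thesis by (simp add: measure_notin_sets)
    qed
    also have "\<dots> \<le> measure M E1 + measure M E2 + measure M E3 + measure M E4"
    proof -
      have "measure M (E1 \<union> E2 \<union> E3 \<union> E4) \<le> measure M (E1 \<union> E2 \<union> E3) + measure M E4"
        using E1m E2m E3m E4m by (intro measure_Un_le) auto
      moreover have "measure M (E1 \<union> E2 \<union> E3) \<le> measure M (E1 \<union> E2) + measure M E3"
        using E1m E2m E3m by (intro measure_Un_le) auto
      moreover have "measure M (E1 \<union> E2) \<le> measure M E1 + measure M E2"
        using E1m E2m by (intro measure_Un_le) auto
      ultimately show ?thesis by linarith
    qed
    also have "\<dots> \<le> B n"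
      using P1 P2 P3 P4 Q1 Q2 Q3 Q4 Bsum by linarith
    finally show ?thesis .
  qed
  have ev: "eventually (\<lambda>n. measure M (bad n) \<le> B n) sequentially"
  proof -
    have e1: "eventually (\<lambda>n. n \<ge> 2) sequentially" by (rule eventually_ge_at_top)
    have e2: "eventually (\<lambda>n. z n \<ge> 1) sequentially" using zlim by (simp add: filterlim_at_top)
    have e3: "eventually (\<lambda>n. e0 - \<epsilon>/4 < q n) sequentially"
      using order_tendstoD(1)[OF qlim, of "e0 - \<epsilon>/4"] \<epsilon>_pos by simp
    have e4: "eventually (\<lambda>n. q n < e0 + \<epsilon>/4) sequentially"
      using order_tendstoD(2)[OF qlim, of "e0 + \<epsilon>/4"] \<epsilon>_pos by simp
    have e5: "eventually (\<lambda>n. w n < \<epsilon>/4) sequentially"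
      using order_tendstoD(2)[OF wlim, of "\<epsilon>/4"] \<epsilon>_pos by simp
    from e1 e2 e3 e4 e5 show ?thesis by eventually_elim (rule key)
  qed
  have "(\<lambda>n. measure M (bad n)) \<longlonglongrightarrow> 0"
  proof (rule tendsto_sandwich[OF _ ev tendsto_const Blim])
    show "eventually (\<lambda>n. 0 \<le> measure M (bad n)) sequentially" by simp
  qed
  then show ?thesis unfolding bad_def .
qed

end
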